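(* Let $n$ be a positive integer, let $p\ge q$ be positive integers, and let $B$ be a $p\times q$ matrix with nonnegative real entries. For each positive divisor $k$ of $n$, let $F_k$ be the symmetric block matrix of size $kq+\frac{n}{k}p$ whose block rows and columns have sizes, in order, $p$, then $q$ repeated $k$ times, then $p$ repeated $\frac{n}{k}-1$ times; the block in a size-$p$ block row and a size-$q$ block column is $B$, the block in a size-$q$ block row and a size-$p$ block column is $B^T$, and all other blocks are zero. Then the normalized Laplacians $L\big(F_k\oplus 0_{(n-\frac{n}{k})p+(1-k)q}\big)$, as $k$ ranges over all positive divisors of $n$, are pairwise cospectral.
   Context: For matrices $X,Y$, $X\oplus Y=\begin{bmatrix} X&0\\0&Y\end{bmatrix}$; $0_m$ is the $m\times m$ zero matrix. For a nonnegative real symmetric matrix $M$ with positive row sums, its normalized Laplacian is $L(M)=I-\Delta^{-1/2}M\Delta^{-1/2}$, where $\Delta$ is the diagonal matrix of row sums of $M$. If $M$ has zero row sums, write (after a simultaneous permutation of rows and columns) $M=M_1\oplus 0_k$ where $M_1$ has positive row sums; then $L(M)=L(M_1)\oplus I_k$. Two square matrices are cospectral if they have the same eigenvalues with the same multiplicities. *)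

theory Defs
  imports "Jordan_Normal_Form.Char_Poly"
begin

definition row_sum :: "real mat \<Rightarrow> nat \<Rightarrow> real" where
  "row_sum M i = (\<Sum>j<dim_col M. M $$ (i, j))"

text \<open>Normalized Laplacian L(M) = I - D M D with D = diag(1/sqrt(d_i)), where
  1/sqrt 0 is read as 0 (Isabelle's inverse 0 = 0).  For rows with zero row sum
  this gives the entries of the identity, i.e. it is exactly L(M_1) + I_k up to
  the simultaneous permutation used in the paper's convention.\<close>
definition norm_laplacian :: "real mat \<Rightarrow> real mat" where
  "norm_laplacian M = mat (dim_row M) (dim_row M)
     (\<lambda>(i, j). (if i = j then 1 else 0)
        - inverse (sqrt (row_sum M i)) * M $$ (i, j) * inverse (sqrt (row_sum M j)))"

definition cospectral :: "real mat \<Rightarrow> real mat \<Rightarrow> bool" where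
  "cospectral A C \<longleftrightarrow> A \<in> carrier_mat (dim_row A) (dim_row A)
     \<and> C \<in> carrier_mat (dim_row A) (dim_row A)
     \<and> (\<forall>z::complex. order z (char_poly (map_mat complex_of_real A))
                   = order z (char_poly (map_mat complex_of_real C)))"

text \<open>Classification of an index of F_k: block sizes p, then q (k times), then p
  (n/k - 1 times).  Inl a = local row a of a size-p block, Inr b = local index b of
  a size-q block.\<close>
definition F_idx :: "nat \<Rightarrow> nat \<Rightarrow> nat \<Rightarrow> nat \<Rightarrow> nat + nat" where
  "F_idx p q k i = (if i < p then Inl i
                    else if i < p + k * q then Inr ((i - p) mod q)
                    else Inl ((i - p - k * q) mod p))"

definition F_mat :: "nat \<Rightarrow> nat \<Rightarrow> nat \<Rightarrow> real mat \<Rightarrow> nat \<Rightarrow> real mat" where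
  "F_mat n p q B k = mat (k * q + (n div k) * p) (k * q + (n div k) * p)
     (\<lambda>(i, j). case (F_idx p q k i, F_idx p q k j) of
         (Inl a, Inr b) \<Rightarrow> B $$ (a, b)
       | (Inr b, Inl a) \<Rightarrow> B $$ (a, b)
       | _ \<Rightarrow> 0)"

text \<open>F_k \<oplus> 0_m with m = (n - n/k) p + (1 - k) q (nonnegative since p \<ge> q).\<close>
definition F_pad :: "nat \<Rightarrow> nat \<Rightarrow> nat \<Rightarrow> real mat \<Rightarrow> nat \<Rightarrow> real mat" where
  "F_pad n p q B k = (let N = k * q + (n div k) * p;
                          m = (n - n div k) * p + q - k * q
                      in four_block_mat (F_mat n p q B k) (0\<^sub>m N m) (0\<^sub>m m N) (0\<^sub>m m m))"

end

theory Submission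
  imports Defs
begin

lemma sum_split_nat: "(\<Sum>i<(a::nat)+b. f i) = (\<Sum>i<a. f i) + (\<Sum>i<b. f (a+i))"
  by (induction b) (auto simp: add.assoc)

lemma sum_mod_rep: "(\<Sum>i<t*(q::nat). g (i mod q)) = (of_nat t :: 'a::comm_semiring_1) * (\<Sum>b<q. g b)"
proof (induction t)
  case 0 then show ?case by simp
next
  case (Suc t)
  have "(\<Sum>i<Suc t*q. g (i mod q)) = (\<Sum>i<t*q + q. g (i mod q))" by (simp add: add.commute)
  also have "\<dots> = (\<Sum>i<t*q. g (i mod q)) + (\<Sum>i<q. g ((t*q+i) mod q))" by (rule sum_split_nat)
  also have "(\<Sum>i<q. g ((t*q+i) mod q)) = (\<Sum>i<q. g i)" by (rule sum.cong) auto
  finally show ?case using Suc by (simp add: algebra_simps)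
qed

lemma sum_const_poly: "(\<Sum>i\<in>A. [:f i:]) = [:\<Sum>i\<in>A. f i:]"
  by (induction A rule: infinite_finite_induct) auto

lemma sylvester_det:
  fixes c :: "'a::idom" and P R :: "'a mat"
  assumes P: "P \<in> carrier_mat N r" and R: "R \<in> carrier_mat r N"
  shows "c ^ r * det (c \<cdot>\<^sub>m 1\<^sub>m N - P * R) = c ^ N * det (c \<cdot>\<^sub>m 1\<^sub>m r - R * P)"
proof -
  define M where "M = four_block_mat (c \<cdot>\<^sub>m 1\<^sub>m N) P R (1\<^sub>m r)"
  define L1 where "L1 = four_block_mat (1\<^sub>m N) (- P) (0\<^sub>m r N) (c \<cdot>\<^sub>m 1\<^sub>m r)"
  define L2 where "L2 = four_block_mat (1\<^sub>m N) (0\<^sub>m N r) (- R) (c \<cdot>\<^sub>m 1\<^sub>m r)"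
  have PR: "P * R \<in> carrier_mat N N" and RP: "R * P \<in> carrier_mat r r" using P R by auto
  have Mc: "M \<in> carrier_mat (N+r) (N+r)" unfolding M_def using P R by auto
  have L1c: "L1 \<in> carrier_mat (N+r) (N+r)" unfolding L1_def using P R by auto
  have L2c: "L2 \<in> carrier_mat (N+r) (N+r)" unfolding L2_def using P R by auto
  have dL1: "det L1 = c ^ r" unfolding L1_def
    by (subst det_four_block_mat_lower_left_zero[where n=N and m=r], insert P, auto)
  have dL2: "det L2 = c ^ r" unfolding L2_def
    by (subst det_four_block_mat_upper_right_zero[where n=N and m=r], insert R, auto)
  have "L1 * M = four_block_mat (c \<cdot>\<^sub>m 1\<^sub>m N - P * R) (0\<^sub>m N r) (c \<cdot>\<^sub>m R) (c \<cdot>\<^sub>m 1\<^sub>m r)"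
    unfolding L1_def M_def
    apply (subst mult_four_block_mat[of _ N N _ r _ r _ _ N _ r])
    using P R apply (auto)
    done
  note eq1 = this
  have e1: "det (L1 * M) = det (c \<cdot>\<^sub>m 1\<^sub>m N - P * R) * c ^ r"
    unfolding eq1 using P R PR by (subst det_four_block_mat_upper_right_zero[where n=N and m=r], auto)
  have "L2 * M = four_block_mat (c \<cdot>\<^sub>m 1\<^sub>m N) P (0\<^sub>m r N) (c \<cdot>\<^sub>m 1\<^sub>m r - R * P)"
    unfolding L2_def M_def
    apply (subst mult_four_block_mat[of _ N N _ r _ r _ _ N _ r])
    using P R apply (auto)
    done
  note eq2 = this
  have e2: "det (L2 * M) = c ^ N * det (c \<cdot>\<^sub>m 1\<^sub>m r - R * P)"
    unfolding eq2 using P R RP by (subst det_four_block_mat_lower_left_zero[where n=N and m=r], auto)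
  have "det (L1 * M) = c^r * det M" using det_mult[OF L1c Mc] dL1 by simp
  moreover have "det (L2 * M) = c^r * det M" using det_mult[OF L2c Mc] dL2 by simp
  ultimately show ?thesis using e1 e2 by (simp add: mult.commute)
qed
lemma map_mult1: assumes "A \<in> carrier_mat n m" "C \<in> carrier_mat m l"
  shows "map_mat (\<lambda>a. [:a:]) A * map_mat (\<lambda>a. [:-a:]) C = map_mat (\<lambda>a::'a::comm_ring_1. [:-a:]) (A*C)"
proof (rule eq_matI)
  fix i j assume "i < dim_row (map_mat (\<lambda>a. [:-a:]) (A*C))" "j < dim_col (map_mat (\<lambda>a. [:-a:]) (A*C))"
  then show "(map_mat (\<lambda>a. [:a:]) A * map_mat (\<lambda>a. [:-a:]) C) $$ (i,j) = map_mat (\<lambda>a. [:-a:]) (A*C) $$ (i,j)"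
    using assms by (simp add: scalar_prod_def sum_const_poly sum_negf mult.commute)
qed (use assms in auto)

lemma map_mult2: assumes "A \<in> carrier_mat n m" "C \<in> carrier_mat m l"
  shows "map_mat (\<lambda>a. [:-a:]) A * map_mat (\<lambda>a. [:a:]) C = map_mat (\<lambda>a::'a::comm_ring_1. [:-a:]) (A*C)"
proof (rule eq_matI)
  fix i j assume "i < dim_row (map_mat (\<lambda>a. [:-a:]) (A*C))" "j < dim_col (map_mat (\<lambda>a. [:-a:]) (A*C))"
  then show "(map_mat (\<lambda>a. [:-a:]) A * map_mat (\<lambda>a. [:a:]) C) $$ (i,j) = map_mat (\<lambda>a. [:-a:]) (A*C) $$ (i,j)"
    using assms by (simp add: scalar_prod_def sum_const_poly sum_negf mult.commute)
qed (use assms in auto)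


lemma sum_F_idx:
  assumes "0 < m"
  shows "(\<Sum>i<k*q + m*p. f (F_idx p q k i)) =
     (of_nat m :: 'a::comm_semiring_1) * (\<Sum>a<p. f (Inl a)) + of_nat k * (\<Sum>b<q. f (Inr b))"
proof -
  have e: "k*q + m*p = p + (k*q + (m-1)*p)" using assms by (cases m) auto
  have "(\<Sum>i<k*q + m*p. f (F_idx p q k i)) = (\<Sum>i<p + (k*q + (m-1)*p). f (F_idx p q k i))"
    by (simp only: e)
  also have "\<dots> = (\<Sum>i<p. f (F_idx p q k i)) + ((\<Sum>i<k*q. f (F_idx p q k (p+i)))
       + (\<Sum>i<(m-1)*p. f (F_idx p q k (p+(k*q+i)))))"
    by (simp add: sum_split_nat)
  also have "(\<Sum>i<p. f (F_idx p q k i)) = (\<Sum>a<p. f (Inl a))"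
    by (rule sum.cong) (auto simp: F_idx_def)
  also have "(\<Sum>i<k*q. f (F_idx p q k (p+i))) = (\<Sum>i<k*q. f (Inr (i mod q)))"
    by (rule sum.cong) (auto simp: F_idx_def)
  also have "\<dots> = of_nat k * (\<Sum>b<q. f (Inr b))" by (rule sum_mod_rep)
  also have "(\<Sum>i<(m-1)*p. f (F_idx p q k (p+(k*q+i)))) = (\<Sum>i<(m-1)*p. f (Inl (i mod p)))"
    by (rule sum.cong) (auto simp: F_idx_def)
  also have "\<dots> = of_nat (m-1) * (\<Sum>a<p. f (Inl a))" by (rule sum_mod_rep)
  finally show ?thesis using assms by (cases m) (auto simp: algebra_simps)
qed

definition isq :: "real \<Rightarrow> real" where "isq x = inverse (sqrt x)"
definition rB :: "real mat \<Rightarrow> nat \<Rightarrow> nat \<Rightarrow> real" where "rB B q a = (\<Sum>b<q. B $$ (a,b))"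
definition cB :: "real mat \<Rightarrow> nat \<Rightarrow> nat \<Rightarrow> real" where "cB B p b = (\<Sum>a<p. B $$ (a,b))"
definition hh :: "real mat \<Rightarrow> nat + nat \<Rightarrow> nat + nat \<Rightarrow> real" where
  "hh B x y = (case (x,y) of (Inl a, Inr b) \<Rightarrow> B $$ (a,b) | (Inr b, Inl a) \<Rightarrow> B $$ (a,b) | _ \<Rightarrow> 0)"
definition ss :: "nat \<Rightarrow> nat \<Rightarrow> real mat \<Rightarrow> nat + nat \<Rightarrow> nat + nat \<Rightarrow> real" where
  "ss p q B x y = (case (x,y) of (Inl a, Inr b) \<Rightarrow> B $$ (a,b) * isq (rB B q a) * isq (cB B p b)
     | (Inr b, Inl a) \<Rightarrow> B $$ (a,b) * isq (rB B q a) * isq (cB B p b) | _ \<Rightarrow> 0)"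
definition emb :: "nat \<Rightarrow> nat + nat \<Rightarrow> nat" where "emb p x = (case x of Inl a \<Rightarrow> a | Inr b \<Rightarrow> p + b)"
definition uemb :: "nat \<Rightarrow> nat \<Rightarrow> nat + nat" where "uemb p l = (if l < p then Inl l else Inr (l - p))"
definition ww :: "nat \<Rightarrow> nat \<Rightarrow> nat + nat \<Rightarrow> real" where
  "ww k m x = (case x of Inl _ \<Rightarrow> isq (real m) | Inr _ \<Rightarrow> isq (real k))"
definition Pm :: "nat \<Rightarrow> nat \<Rightarrow> nat \<Rightarrow> nat \<Rightarrow> real mat" where
  "Pm n p q k = mat (n*p+q) (p+q) (\<lambda>(i,l). if i < k*q + (n div k)*p \<and> emb p (F_idx p q k i) = l
      then ww k (n div k) (F_idx p q k i) else 0)"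
definition Rm :: "nat \<Rightarrow> nat \<Rightarrow> nat \<Rightarrow> real mat \<Rightarrow> nat \<Rightarrow> real mat" where
  "Rm n p q B k = mat (p+q) (n*p+q) (\<lambda>(l,j). if j < k*q + (n div k)*p
      then ww k (n div k) (F_idx p q k j) * ss p q B (uemb p l) (F_idx p q k j) else 0)"
definition Sm :: "nat \<Rightarrow> nat \<Rightarrow> real mat \<Rightarrow> real mat" where
  "Sm p q B = mat (p+q) (p+q) (\<lambda>(l,l'). ss p q B (uemb p l) (uemb p l'))"

lemma isq_mult: "isq (a * b) = isq a * isq b"
  unfolding isq_def by (simp add: real_sqrt_mult)

lemma isq_sq: "0 < x \<Longrightarrow> x * (isq x * isq x) = 1"
  unfolding isq_def by (simp add: field_simps flip: inverse_mult_distrib)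

lemma sum_if_eq: "finite A \<Longrightarrow> (\<Sum>a\<in>A. (f a :: real) * (if a = c then g a else 0)) = (if c \<in> A then f c * g c else 0)"
proof -
  assume A: "finite A"
  have "(\<Sum>a\<in>A. f a * (if a = c then g a else 0)) = (\<Sum>a\<in>A. if a = c then f c * g c else 0)"
    by (rule sum.cong) auto
  also have "\<dots> = (if c \<in> A then f c * g c else 0)" using A by simp
  finally show ?thesis .
qed

lemma uemb_emb: "(case x of Inl a \<Rightarrow> a < p | Inr b \<Rightarrow> b < q) \<Longrightarrow> uemb p (emb p x) = x"
  unfolding uemb_def emb_def by (cases x) auto

context
  fixes n p q :: nat and B :: "real mat" and k :: nat
  assumes n0: "0 < n" and q0: "0 < q" and qp: "q \<le> p" and Bc: "B \<in> carrier_mat p q"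
    and k0: "0 < k" and kd: "k dvd n"
begin

lemma mk: "(n div k) * k = n" "0 < n div k"
proof -
  show "n div k * k = n" using kd by simp
  then show "0 < n div k" using n0 by (metis mult_0 neq0_conv)
qed

lemma dims: "k*q + (n div k)*p + ((n - n div k) * p + q - k * q) = n*p + q"
proof -
  define m where "m = n div k"
  have nm: "n = m * k" using mk m_def by simp
  have m0: "0 < m" using mk m_def by simp
  have "(k - 1) * q \<le> (k-1) * p" using qp by simp
  also have "\<dots> \<le> m * ((k-1) * p)" using m0 by simp
  also have "m * ((k-1) * p) = (n - m) * p" unfolding nm by (simp add: algebra_simps diff_mult_distrib2)
  finally have "(k-1)*q \<le> (n-m)*p" .
  hence "k * q \<le> (n - m) * p + q" using k0 by (cases k) auto
  moreover have "m * p \<le> n * p" unfolding nm using k0 by simp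
  moreover have "(n-m)*p = n*p - m*p" by (simp add: diff_mult_distrib)
  ultimately show ?thesis unfolding m_def[symmetric]
    by linarith
qed

lemma idx_valid: "i < k*q + (n div k)*p \<Longrightarrow> (case F_idx p q k i of Inl a \<Rightarrow> a < p | Inr b \<Rightarrow> b < q)"
  using q0 qp unfolding F_idx_def by auto

lemma Fpad_carrier: "F_pad n p q B k \<in> carrier_mat (n*p+q) (n*p+q)"
proof -
  have "F_mat n p q B k \<in> carrier_mat (k*q + (n div k)*p) (k*q + (n div k)*p)"
    unfolding F_mat_def by (rule mat_carrier)
  from four_block_carrier_mat[OF this zero_carrier_mat[of "(n - n div k) * p + q - k * q" "(n - n div k) * p + q - k * q"]]
  show ?thesis unfolding F_pad_def Let_def dims .
qed

lemma Fpad_index: assumes "i < n*p+q" "j < n*p+q"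
  shows "F_pad n p q B k $$ (i,j) = (if i < k*q + (n div k)*p \<and> j < k*q + (n div k)*p
     then hh B (F_idx p q k i) (F_idx p q k j) else 0)"
proof -
  have "F_mat n p q B k \<in> carrier_mat (k*q + (n div k)*p) (k*q + (n div k)*p)"
    unfolding F_mat_def by (rule mat_carrier)
  then show ?thesis
    using assms dims unfolding F_pad_def Let_def
    apply (subst index_mat_four_block)
      apply simp_all
    apply (auto simp: F_mat_def hh_def split: sum.splits)
    done
qed

lemma rowsum_out: assumes "i < n*p+q" "\<not> i < k*q + (n div k)*p"
  shows "row_sum (F_pad n p q B k) i = 0"
  unfolding row_sum_def using Fpad_carrier Fpad_index assms by simp

lemma rowsum_in: assumes i: "i < k*q + (n div k)*p"
  shows "row_sum (F_pad n p q B k) i = (case F_idx p q k i of Inl a \<Rightarrow> real k * rB B q a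
     | Inr b \<Rightarrow> real (n div k) * cB B p b)"
proof -
  let ?N = "k*q + (n div k)*p" and ?M = "(n - n div k) * p + q - k * q"
  have iN: "i < n*p+q" using i dims by linarith
  have "row_sum (F_pad n p q B k) i = (\<Sum>j<?N + ?M. F_pad n p q B k $$ (i,j))"
    unfolding row_sum_def using Fpad_carrier dims by simp
  also have "\<dots> = (\<Sum>j<?N. F_pad n p q B k $$ (i,j)) + (\<Sum>j<?M. F_pad n p q B k $$ (i,?N + j))"
    by (rule sum_split_nat)
  also have "(\<Sum>j<?M. F_pad n p q B k $$ (i,?N + j)) = 0"
    by (rule sum.neutral) (use dims Fpad_index iN in auto)
  also have "(\<Sum>j<?N. F_pad n p q B k $$ (i,j)) = (\<Sum>j<?N. hh B (F_idx p q k i) (F_idx p q k j))"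
    by (rule sum.cong) (use dims Fpad_index i in auto)
  also have "\<dots> = real (n div k) * (\<Sum>a<p. hh B (F_idx p q k i) (Inl a)) + real k * (\<Sum>b<q. hh B (F_idx p q k i) (Inr b))"
    by (rule sum_F_idx) (rule mk)
  finally show ?thesis
    by (auto simp: hh_def rB_def cB_def split: sum.splits)
qed

lemma L_index: assumes i: "i < n*p+q" and j: "j < n*p+q"
  shows "norm_laplacian (F_pad n p q B k) $$ (i,j) = (if i = j then 1 else 0)
    - (if i < k*q + (n div k)*p \<and> j < k*q + (n div k)*p
       then ww k (n div k) (F_idx p q k i) * ww k (n div k) (F_idx p q k j) * ss p q B (F_idx p q k i) (F_idx p q k j)
       else 0)"
proof (cases "i < k*q + (n div k)*p \<and> j < k*q + (n div k)*p")
  case True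
  have vi: "case F_idx p q k i of Inl a \<Rightarrow> a < p | Inr b \<Rightarrow> b < q" using idx_valid True by blast
  have vj: "case F_idx p q k j of Inl a \<Rightarrow> a < p | Inr b \<Rightarrow> b < q" using idx_valid True by blast
  show ?thesis using True i j Fpad_carrier
    unfolding norm_laplacian_def
    apply (simp add: Fpad_index rowsum_in flip: isq_def)
    using vi vj
    apply (auto simp: hh_def ss_def ww_def isq_mult split: sum.splits)
    done
next
  case False
  then show ?thesis using i j Fpad_carrier
    unfolding norm_laplacian_def by (auto simp: Fpad_index)
qed

lemma L_carrier: "norm_laplacian (F_pad n p q B k) \<in> carrier_mat (n*p+q) (n*p+q)"
  unfolding norm_laplacian_def using Fpad_carrier by simp

lemma PR_index: assumes i: "i < n*p+q" and j: "j < n*p+q"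
  shows "(Pm n p q k * Rm n p q B k) $$ (i,j) = 
      (if i < k*q + (n div k)*p \<and> j < k*q + (n div k)*p
       then ww k (n div k) (F_idx p q k i) * ww k (n div k) (F_idx p q k j) * ss p q B (F_idx p q k i) (F_idx p q k j)
       else 0)" (is "_ = ?rhs")
proof -
  have "(Pm n p q k * Rm n p q B k) $$ (i,j) = (\<Sum>l\<in>{0..<p+q}. Pm n p q k $$ (i,l) * Rm n p q B k $$ (l,j))"
    using i j unfolding Pm_def Rm_def by (simp add: scalar_prod_def)
  also have "\<dots> = (\<Sum>l\<in>{0..<p+q}. (if l = emb p (F_idx p q k i) then (if i < k*q + (n div k)*p then ww k (n div k) (F_idx p q k i) else 0) else 0) * Rm n p q B k $$ (l,j))"
    by (rule sum.cong) (auto simp: Pm_def i)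
  also have "\<dots> = (if emb p (F_idx p q k i) < p + q then (if i < k*q + (n div k)*p then ww k (n div k) (F_idx p q k i) else 0) * Rm n p q B k $$ (emb p (F_idx p q k i),j) else 0)"
    by (subst sum.cong[OF refl, where h = "\<lambda>l. if l = emb p (F_idx p q k i) then (if i < k*q + (n div k)*p then ww k (n div k) (F_idx p q k i) else 0) * Rm n p q B k $$ (l,j) else 0"]) auto
  also have "\<dots> = ?rhs"
  proof (cases "i < k*q + (n div k)*p")
    case True
    have vi: "case F_idx p q k i of Inl a \<Rightarrow> a < p | Inr b \<Rightarrow> b < q" using idx_valid True by blast
    hence e: "emb p (F_idx p q k i) < p + q" unfolding emb_def by (auto split: sum.splits)
    show ?thesis using True e j unfolding Rm_def by (simp add: uemb_emb[OF vi])
  qed auto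
  finally show ?thesis .
qed

lemma RP_index: assumes l: "l < p+q" and l': "l' < p+q"
  shows "(Rm n p q B k * Pm n p q k) $$ (l,l') = ss p q B (uemb p l) (uemb p l')"
proof -
  let ?N = "k*q + (n div k)*p" and ?M = "(n - n div k) * p + q - k * q"
  let ?m = "n div k"
  define f where "f x = ww k ?m x * ss p q B (uemb p l) x * (if emb p x = l' then ww k ?m x else 0)" for x
  have "(Rm n p q B k * Pm n p q k) $$ (l,l') = (\<Sum>j\<in>{0..<n*p+q}. Rm n p q B k $$ (l,j) * Pm n p q k $$ (j,l'))"
    using l l' unfolding Pm_def Rm_def by (simp add: scalar_prod_def)
  also have "\<dots> = (\<Sum>j<?N + ?M. Rm n p q B k $$ (l,j) * Pm n p q k $$ (j,l'))"
    using dims by (simp add: lessThan_atLeast0)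
  also have "\<dots> = (\<Sum>j<?N. Rm n p q B k $$ (l,j) * Pm n p q k $$ (j,l')) + (\<Sum>j<?M. Rm n p q B k $$ (l,?N+j) * Pm n p q k $$ (?N+j,l'))"
    by (rule sum_split_nat)
  also have "(\<Sum>j<?M. Rm n p q B k $$ (l,?N+j) * Pm n p q k $$ (?N+j,l')) = 0"
    by (rule sum.neutral) (use dims l l' in \<open>auto simp: Rm_def Pm_def\<close>)
  also have "(\<Sum>j<?N. Rm n p q B k $$ (l,j) * Pm n p q k $$ (j,l')) = (\<Sum>j<?N. f (F_idx p q k j))"
    by (rule sum.cong) (use dims l l' in \<open>auto simp: Rm_def Pm_def f_def\<close>)
  also have "\<dots> = real ?m * (\<Sum>a<p. f (Inl a)) + real k * (\<Sum>b<q. f (Inr b))"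
    by (rule sum_F_idx) (rule mk)
  also have "(\<Sum>a<p. f (Inl a)) = (if l' < p then isq ?m * ss p q B (uemb p l) (Inl l') * isq ?m else 0)"
    unfolding f_def ww_def emb_def by (simp add: sum_if_eq)
  also have "(\<Sum>b<q. f (Inr b)) = (if p \<le> l' then isq k * ss p q B (uemb p l) (Inr (l'-p)) * isq k else 0)"
  proof (cases "p \<le> l'")
    case True
    have "(\<Sum>b<q. f (Inr b)) = (\<Sum>b<q. isq k * ss p q B (uemb p l) (Inr b) * (if b = l' - p then isq k else 0))"
      by (rule sum.cong) (use True in \<open>auto simp: f_def ww_def emb_def\<close>)
    also have "\<dots> = isq k * ss p q B (uemb p l) (Inr (l'-p)) * isq k" using True l' by (simp add: sum_if_eq)
    finally show ?thesis using True by simp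
  next
    case False
    then show ?thesis by (auto simp: f_def emb_def intro!: sum.neutral)
  qed
  finally show ?thesis using mk(2) k0 isq_sq[of "real ?m"] isq_sq[of "real k"]
    by (auto simp: uemb_def algebra_simps)
qed

lemma Pm_carrier: "Pm n p q k \<in> carrier_mat (n*p+q) (p+q)" unfolding Pm_def by simp
lemma Rm_carrier: "Rm n p q B k \<in> carrier_mat (p+q) (n*p+q)" unfolding Rm_def by simp

lemma L_eq: "norm_laplacian (F_pad n p q B k) = 1\<^sub>m (n*p+q) - Pm n p q k * Rm n p q B k"
proof (rule eq_matI)
  fix i j assume i: "i < dim_row (1\<^sub>m (n*p+q) - Pm n p q k * Rm n p q B k)"
    and j: "j < dim_col (1\<^sub>m (n*p+q) - Pm n p q k * Rm n p q B k)"
  have i': "i < n*p+q" and j': "j < n*p+q" using i j Pm_carrier Rm_carrier by auto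
  show "norm_laplacian (F_pad n p q B k) $$ (i, j) = (1\<^sub>m (n*p+q) - Pm n p q k * Rm n p q B k) $$ (i, j)"
  proof -
    have e: "(1\<^sub>m (n*p+q) - Pm n p q k * Rm n p q B k) $$ (i,j) = 1\<^sub>m (n*p+q) $$ (i,j) - (Pm n p q k * Rm n p q B k) $$ (i,j)"
      using i' j' Pm_carrier Rm_carrier by (intro index_minus_mat(1)) auto
    show ?thesis unfolding e PR_index[OF i' j'] L_index[OF i' j'] index_one_mat(1)[OF i' j'] ..
  qed
qed (use L_carrier Pm_carrier Rm_carrier in auto)

lemma RP_eq: "Rm n p q B k * Pm n p q k = Sm p q B"
proof (rule eq_matI)
  fix i j assume i: "i < dim_row (Sm p q B)" and j: "j < dim_col (Sm p q B)"
  have i': "i < p+q" and j': "j < p+q" using i j by (auto simp: Sm_def)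
  show "(Rm n p q B k * Pm n p q k) $$ (i, j) = Sm p q B $$ (i, j)"
    using RP_index[OF i' j'] i' j' by (simp add: Sm_def)
qed (use Pm_carrier Rm_carrier in \<open>auto simp: Sm_def\<close>)

lemma cp_main: "[:-1,1:] ^ (p+q) * char_poly (norm_laplacian (F_pad n p q B k))
   = [:-1,1:] ^ (n*p+q) * det ([:-1,1:] \<cdot>\<^sub>m 1\<^sub>m (p+q) - map_mat (\<lambda>a. [:-a:]) (Sm p q B))"
proof -
  let ?c = "[:-1,1:] :: real poly"
  let ?P = "map_mat (\<lambda>a. [:a:]) (Pm n p q k)" and ?R = "map_mat (\<lambda>a. [:-a:]) (Rm n p q B k)"
  have P: "?P \<in> carrier_mat (n*p+q) (p+q)" using Pm_carrier by simp
  have R: "?R \<in> carrier_mat (p+q) (n*p+q)" using Rm_carrier by simp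
  have PR: "?P * ?R = map_mat (\<lambda>a. [:-a:]) (Pm n p q k * Rm n p q B k)"
    by (rule map_mult1[OF Pm_carrier Rm_carrier])
  have RP: "?R * ?P = map_mat (\<lambda>a. [:-a:]) (Sm p q B)"
    unfolding RP_eq[symmetric] by (rule map_mult2[OF Rm_carrier Pm_carrier])
  have dPR: "dim_row (Pm n p q k) = n*p+q" "dim_col (Rm n p q B k) = n*p+q"
    using Pm_carrier Rm_carrier by auto
  have cm: "char_poly_matrix (norm_laplacian (F_pad n p q B k)) = ?c \<cdot>\<^sub>m 1\<^sub>m (n*p+q) - ?P * ?R"
    unfolding PR L_eq char_poly_matrix_def
  proof (rule eq_matI)
    fix i j assume "i < dim_row (?c \<cdot>\<^sub>m 1\<^sub>m (n*p+q) - map_mat (\<lambda>a. [:-a:]) (Pm n p q k * Rm n p q B k))"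
      "j < dim_col (?c \<cdot>\<^sub>m 1\<^sub>m (n*p+q) - map_mat (\<lambda>a. [:-a:]) (Pm n p q k * Rm n p q B k))"
    then show "([:0, 1:] \<cdot>\<^sub>m 1\<^sub>m (dim_row (1\<^sub>m (n * p + q) - Pm n p q k * Rm n p q B k)) +
          map_mat (\<lambda>a. [:- a:]) (1\<^sub>m (n * p + q) - Pm n p q k * Rm n p q B k)) $$ (i, j) =
         (?c \<cdot>\<^sub>m 1\<^sub>m (n*p+q) - map_mat (\<lambda>a. [:-a:]) (Pm n p q k * Rm n p q B k)) $$ (i,j)"
      using Pm_carrier Rm_carrier dPR by (cases "i = j") (auto simp del: index_mult_mat(1))
  qed (use Pm_carrier Rm_carrier in auto)
  show ?thesis unfolding char_poly_def cm RP[symmetric] by (rule sylvester_det[OF P R])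
qed

end
theorem theorem3p6:
  fixes n p q :: nat and B :: "real mat"
  assumes "0 < n" and "0 < q" and "q \<le> p"
    and "B \<in> carrier_mat p q"
    and "\<forall>i<p. \<forall>j<q. 0 \<le> B $$ (i, j)"
  shows "\<forall>k1 k2. 0 < k1 \<and> k1 dvd n \<and> 0 < k2 \<and> k2 dvd n \<longrightarrow>
           cospectral (norm_laplacian (F_pad n p q B k1)) (norm_laplacian (F_pad n p q B k2))"
proof (intro allI impI)
  fix k1 k2 assume h: "0 < k1 \<and> k1 dvd n \<and> 0 < k2 \<and> k2 dvd n"
  let ?L1 = "norm_laplacian (F_pad n p q B k1)" and ?L2 = "norm_laplacian (F_pad n p q B k2)"
  let ?c = "[:-1,1:] :: real poly"
  have C1: "?L1 \<in> carrier_mat (n*p+q) (n*p+q)" using L_carrier[OF assms(1-4)] h by blast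
  have C2: "?L2 \<in> carrier_mat (n*p+q) (n*p+q)" using L_carrier[OF assms(1-4)] h by blast
  have "?c ^ (p+q) * char_poly ?L1 = ?c ^ (p+q) * char_poly ?L2"
    using cp_main[OF assms(1-4), of k1] cp_main[OF assms(1-4), of k2] h by simp
  moreover have "?c ^ (p+q) \<noteq> 0" by simp
  ultimately have eq: "char_poly ?L1 = char_poly ?L2" by simp
  have h1: "char_poly (map_mat complex_of_real ?L1) = map_poly complex_of_real (char_poly ?L1)"
    by (rule of_real_hom.char_poly_hom[OF C1])
  have h2: "char_poly (map_mat complex_of_real ?L2) = map_poly complex_of_real (char_poly ?L2)"
    by (rule of_real_hom.char_poly_hom[OF C2])
  have "char_poly (map_mat complex_of_real ?L1) = char_poly (map_mat complex_of_real ?L2)"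
    unfolding h1 h2 eq ..
  then show "cospectral ?L1 ?L2" unfolding cospectral_def using C1 C2 by simp
qed

end
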